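(* Let $x:\mathbb{Z}^2\to\mathbb{RP}^n$ be a Q-net in general position (in particular, no quadrilateral strip of $x$ is contained in a plane). Then the following are equivalent: (i) $x$ is a multi-Q-net. (ii) Every two parameter lines of $x$ of the same direction are in perspective with respect to a point, i.e. for all $i_0\neq i_1$ there is a point $c$ such that $x_{i_0,j},x_{i_1,j},c$ are collinear for all $j$, and for all $j_0\ne j_1$ there is a point $c'$ such that $x_{i,j_0},x_{i,j_1},c'$ are collinear for all $i$. (iii) Every two neighboring parameter lines of $x$ ($x_{i,\cdot}$ and $x_{i+1,\cdot}$, resp. $x_{\cdot,j}$ and $x_{\cdot,j+1}$) are in perspective with respect to a point. (iv) There exist $\mathbf{p},\mathbf{q}:\mathbb{Z}\to\mathbb{R}^{n+1}$ such that $x_{i,j}=[\mathbf{p}_i+\mathbf{q}_j]$ for all $i,j$. (v) Both Laplace transforms of $x$ degenerate to curves, i.e. $y^1_{i,j}$ is independent of $j$ and $y^2_{i,j}$ is independent of $i$.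
   Context: A Q-net is a map $x:\mathbb{Z}^2\to\mathbb{RP}^n$, $x_{i,j}:=x(i,j)$, such that for all $i,j$ the points $x_{i,j},x_{i+1,j},x_{i+1,j+1},x_{i,j+1}$ are coplanar. A multi-Q-net is a map $x:\mathbb{Z}^2\to\mathbb{RP}^n$ such that for all $i_0\neq i_1$, $j_0\neq j_1$ the points $x_{i_0,j_0},x_{i_0,j_1},x_{i_1,j_1},x_{i_1,j_0}$ are coplanar. For an elementary quadrilateral of a Q-net, the Laplace points are $y^1_{i,j}$ = the intersection of the lines $x_{i,j}x_{i+1,j}$ and $x_{i,j+1}x_{i+1,j+1}$, and $y^2_{i,j}$ = the intersection of the lines $x_{i,j}x_{i,j+1}$ and $x_{i+1,j}x_{i+1,j+1}$; the nets $y^1,y^2$ are the Laplace transforms of $x$. For $\mathbf{v}\in\mathbb{R}^{n+1}\setminus\{0\}$, $[\mathbf{v}]$ denotes the corresponding point of $\mathbb{RP}^n$. The parameter lines of $x$ are the polygons $x_{i,\cdot}$ and $x_{\cdot,j}$. *)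

theory Defs
  imports "HOL-Analysis.Analysis"
begin

text \<open>Homogeneous coordinates: a point of RP^n is represented by a nonzero vector of
  real^'m, where CARD('m) = n+1.  A net is a map int => int => real^'m with nonzero values;
  the point x_{i,j} is [x i j].\<close>

definition proj_net :: "(int \<Rightarrow> int \<Rightarrow> real^'m) \<Rightarrow> bool" where
  "proj_net x \<longleftrightarrow> (\<forall>i j. x i j \<noteq> 0)"

definition proj_eq :: "real^'m \<Rightarrow> real^'m \<Rightarrow> bool" where
  "proj_eq u v \<longleftrightarrow> u \<noteq> 0 \<and> v \<noteq> 0 \<and> (\<exists>c. c \<noteq> 0 \<and> u = c *\<^sub>R v)"

definition proj_collinear :: "real^'m \<Rightarrow> real^'m \<Rightarrow> real^'m \<Rightarrow> bool" where
  "proj_collinear a b c \<longleftrightarrow> dim {a, b, c} \<le> 2"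

definition proj_coplanar :: "real^'m \<Rightarrow> real^'m \<Rightarrow> real^'m \<Rightarrow> real^'m \<Rightarrow> bool" where
  "proj_coplanar a b c d \<longleftrightarrow> dim {a, b, c, d} \<le> 3"

definition Q_net :: "(int \<Rightarrow> int \<Rightarrow> real^'m) \<Rightarrow> bool" where
  "Q_net x \<longleftrightarrow> proj_net x \<and>
     (\<forall>i j. proj_coplanar (x i j) (x (i+1) j) (x (i+1) (j+1)) (x i (j+1)))"

definition multi_Q_net :: "(int \<Rightarrow> int \<Rightarrow> real^'m) \<Rightarrow> bool" where
  "multi_Q_net x \<longleftrightarrow> proj_net x \<and>
     (\<forall>i0 i1 j0 j1. i0 \<noteq> i1 \<longrightarrow> j0 \<noteq> j1 \<longrightarrow>
        proj_coplanar (x i0 j0) (x i0 j1) (x i1 j1) (x i1 j0))"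

definition in_perspective :: "(int \<Rightarrow> real^'m) \<Rightarrow> (int \<Rightarrow> real^'m) \<Rightarrow> bool" where
  "in_perspective P Q \<longleftrightarrow> (\<exists>c. c \<noteq> 0 \<and> (\<forall>k. proj_collinear (P k) (Q k) c))"

text \<open>Laplace points, represented as the intersection of the two lines viewed as
  2-dimensional linear subspaces (under general position this is a 1-dimensional
  subspace, i.e. a point of RP^n).\<close>
definition laplace1 :: "(int \<Rightarrow> int \<Rightarrow> real^'m) \<Rightarrow> int \<Rightarrow> int \<Rightarrow> (real^'m) set" where
  "laplace1 x i j = span {x i j, x (i+1) j} \<inter> span {x i (j+1), x (i+1) (j+1)}"

definition laplace2 :: "(int \<Rightarrow> int \<Rightarrow> real^'m) \<Rightarrow> int \<Rightarrow> int \<Rightarrow> (real^'m) set" where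
  "laplace2 x i j = span {x i j, x i (j+1)} \<inter> span {x (i+1) j, x (i+1) (j+1)}"

definition general_position :: "(int \<Rightarrow> int \<Rightarrow> real^'m) \<Rightarrow> bool" where
  "general_position x \<longleftrightarrow>
     (\<forall>i j. \<not> proj_collinear (x i j) (x (i+1) j) (x (i+1) (j+1))
          \<and> \<not> proj_collinear (x i j) (x (i+1) j) (x i (j+1))
          \<and> \<not> proj_collinear (x i j) (x (i+1) (j+1)) (x i (j+1))
          \<and> \<not> proj_collinear (x (i+1) j) (x (i+1) (j+1)) (x i (j+1)))
   \<and> (\<forall>i. dim ((\<lambda>j. x i j) ` UNIV \<union> (\<lambda>j. x (i+1) j) ` UNIV) \<ge> 4)
   \<and> (\<forall>j. dim ((\<lambda>i. x i j) ` UNIV \<union> (\<lambda>i. x i (j+1)) ` UNIV) \<ge> 4)"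

end

theory Submission
  imports Defs
begin



lemma span2: "v \<in> span {a, b} \<longleftrightarrow> (\<exists>s t. v = s *\<^sub>R a + t *\<^sub>R b)"
proof
  assume "v \<in> span {a, b}"
  then obtain s where "v - s *\<^sub>R a \<in> span {b}" by (auto simp: span_breakdown_eq)
  then obtain t where "v - s *\<^sub>R a = t *\<^sub>R b" by (auto simp: span_singleton)
  then show "\<exists>s t. v = s *\<^sub>R a + t *\<^sub>R b" by (metis diff_add_cancel add.commute)
next
  assume "\<exists>s t. v = s *\<^sub>R a + t *\<^sub>R b"
  then show "v \<in> span {a, b}" by (elim exE, simp, intro span_add span_scale span_base) auto
qed

lemma solve3:
  fixes a b c :: "'a::real_vector"
  assumes "\<gamma> \<noteq> 0" "\<alpha> *\<^sub>R a + \<beta> *\<^sub>R b + \<gamma> *\<^sub>R c = 0"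
  shows "c = (-\<alpha>/\<gamma>) *\<^sub>R a + (-\<beta>/\<gamma>) *\<^sub>R b"
proof -
  have "\<gamma> *\<^sub>R c = - (\<alpha> *\<^sub>R a + \<beta> *\<^sub>R b)" using assms(2)
    by (metis add.commute add_eq_0_iff)
  then have "(1/\<gamma>) *\<^sub>R (\<gamma> *\<^sub>R c) = (1/\<gamma>) *\<^sub>R (- (\<alpha> *\<^sub>R a + \<beta> *\<^sub>R b))" by simp
  then show ?thesis using assms(1) by (simp add: scaleR_diff_right scaleR_scaleR divide_inverse mult.commute)
qed

lemma solve4:
  fixes a b c d :: "'a::real_vector"
  assumes "\<delta> \<noteq> 0" "\<alpha> *\<^sub>R a + \<beta> *\<^sub>R b + \<gamma> *\<^sub>R c + \<delta> *\<^sub>R d = 0"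
  shows "d \<in> span {a, b, c}"
proof -
  have "\<delta> *\<^sub>R d = - (\<alpha> *\<^sub>R a + \<beta> *\<^sub>R b + \<gamma> *\<^sub>R c)" using assms(2)
    by (metis add.commute add_eq_0_iff)
  then have "(1/\<delta>) *\<^sub>R (\<delta> *\<^sub>R d) = (1/\<delta>) *\<^sub>R (- (\<alpha> *\<^sub>R a + \<beta> *\<^sub>R b + \<gamma> *\<^sub>R c))" by simp
  then have "d = (1/\<delta>) *\<^sub>R (- (\<alpha> *\<^sub>R a + \<beta> *\<^sub>R b + \<gamma> *\<^sub>R c))" using assms(1) by simp
  also have "\<dots> \<in> span {a,b,c}"
    by (intro span_scale span_neg span_add span_base) auto
  finally show ?thesis .
qed

lemma span_col: "c \<in> span {a, b} \<Longrightarrow> proj_collinear a b c"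
proof -
  assume "c \<in> span {a, b}"
  then have "{a,b,c} \<subseteq> span {a,b}" by (auto intro: span_base)
  then have "dim {a,b,c} \<le> card {a,b}" by (intro dim_le_card) auto
  also have "\<dots> \<le> 2" by (simp add: card_insert_le_m1)
  finally show ?thesis by (simp add: proj_collinear_def)
qed

lemma span_cop: "d \<in> span {a, b, c} \<Longrightarrow> proj_coplanar a b c d"
proof -
  assume "d \<in> span {a, b, c}"
  then have "{a,b,c,d} \<subseteq> span {a,b,c}" by (auto intro: span_base)
  then have "dim {a,b,c,d} \<le> card {a,b,c}" by (intro dim_le_card) auto
  also have "\<dots> \<le> 3" by (simp add: card_insert_le_m1)
  finally show ?thesis by (simp add: proj_coplanar_def)
qed

lemma col_perm1: "proj_collinear a b c \<Longrightarrow> proj_collinear b a c"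
  by (simp add: proj_collinear_def insert_commute)
lemma col_perm2: "proj_collinear a b c \<Longrightarrow> proj_collinear a c b"
  by (simp add: proj_collinear_def insert_commute)

lemma noncol_indep:
  assumes "\<not> proj_collinear a b c" "\<alpha> *\<^sub>R a + \<beta> *\<^sub>R b + \<gamma> *\<^sub>R c = 0"
  shows "\<alpha> = 0 \<and> \<beta> = 0 \<and> \<gamma> = 0"
proof (rule ccontr)
  assume H: "\<not> (\<alpha> = 0 \<and> \<beta> = 0 \<and> \<gamma> = 0)"
  show False
  proof (cases "\<gamma> = 0")
    case False
    then have "c \<in> span {a,b}" using solve3[OF False assms(2)] span2 by blast
    then show False using assms(1) span_col by blast
  next
    case g: True
    show False
    proof (cases "\<beta> = 0")
      case False
      have "\<alpha> *\<^sub>R a + \<gamma> *\<^sub>R c + \<beta> *\<^sub>R b = 0" using assms(2) by (simp add: algebra_simps)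
      then have "b \<in> span {a,c}" using solve3[OF False] span2 by blast
      then show False using assms(1) span_col col_perm2 by blast
    next
      case True
      with g H have "\<alpha> \<noteq> 0" by auto
      have "\<beta> *\<^sub>R b + \<gamma> *\<^sub>R c + \<alpha> *\<^sub>R a = 0" using assms(2) by (simp add: algebra_simps)
      then have "a \<in> span {b,c}" using solve3[OF \<open>\<alpha> \<noteq> 0\<close>] span2 by blast
      then have "proj_collinear b c a" using span_col by blast
      then show False using assms(1) col_perm1 col_perm2 by blast
    qed
  qed
qed

lemma col_combo:
  assumes "proj_collinear a b c"
  shows "\<exists>\<alpha> \<beta> \<gamma>. (\<alpha> \<noteq> 0 \<or> \<beta> \<noteq> 0 \<or> \<gamma> \<noteq> 0) \<and> \<alpha> *\<^sub>R a + \<beta> *\<^sub>R b + \<gamma> *\<^sub>R c = 0"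
proof (rule ccontr)
  assume H: "\<not> ?thesis"
  have ab: "a \<noteq> b"
  proof
    assume "a = b"
    then have "1 *\<^sub>R a + (-1) *\<^sub>R b + 0 *\<^sub>R c = 0" by simp
    then show False using H by (metis zero_neq_neg_one)
  qed
  have ac: "a \<noteq> c"
  proof
    assume "a = c"
    then have "1 *\<^sub>R a + 0 *\<^sub>R b + (-1) *\<^sub>R c = 0" by simp
    then show False using H by (metis zero_neq_neg_one)
  qed
  have bc: "b \<noteq> c"
  proof
    assume "b = c"
    then have "0 *\<^sub>R a + 1 *\<^sub>R b + (-1) *\<^sub>R c = 0" by simp
    then show False using H by (metis zero_neq_neg_one)
  qed
  have "independent {a, b, c}"
  proof
    assume "dependent {a, b, c}"
    then obtain u where "\<exists>v\<in>{a,b,c}. u v \<noteq> 0" "(\<Sum>v\<in>{a,b,c}. u v *\<^sub>R v) = 0"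
      by (auto simp: dependent_finite)
    moreover have "(\<Sum>v\<in>{a,b,c}. u v *\<^sub>R v) = u a *\<^sub>R a + u b *\<^sub>R b + u c *\<^sub>R c"
      using ab ac bc by (simp add: add.assoc)
    ultimately show False using H by auto
  qed
  then have "dim {a,b,c} = 3" using ab ac bc by (simp add: dim_eq_card_independent)
  then show False using assms by (simp add: proj_collinear_def)
qed

lemma cop_combo:
  assumes "proj_coplanar a b c d"
  shows "\<exists>\<alpha> \<beta> \<gamma> \<delta>. (\<alpha> \<noteq> 0 \<or> \<beta> \<noteq> 0 \<or> \<gamma> \<noteq> 0 \<or> \<delta> \<noteq> 0) \<and> \<alpha> *\<^sub>R a + \<beta> *\<^sub>R b + \<gamma> *\<^sub>R c + \<delta> *\<^sub>R d = 0"
proof (rule ccontr)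
  assume H: "\<not> ?thesis"
  have ab: "a \<noteq> b"
  proof
    assume "a = b"
    then have "1 *\<^sub>R a + (-1) *\<^sub>R b + 0 *\<^sub>R c + 0 *\<^sub>R d = 0" by simp
    then show False using H by (metis zero_neq_neg_one)
  qed
  have ac: "a \<noteq> c"
  proof
    assume "a = c"
    then have "1 *\<^sub>R a + 0 *\<^sub>R b + (-1) *\<^sub>R c + 0 *\<^sub>R d = 0" by simp
    then show False using H by (metis zero_neq_neg_one)
  qed
  have ad: "a \<noteq> d"
  proof
    assume "a = d"
    then have "1 *\<^sub>R a + 0 *\<^sub>R b + 0 *\<^sub>R c + (-1) *\<^sub>R d = 0" by simp
    then show False using H by (metis zero_neq_neg_one)
  qed
  have bc: "b \<noteq> c"
  proof
    assume "b = c"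
    then have "0 *\<^sub>R a + 1 *\<^sub>R b + (-1) *\<^sub>R c + 0 *\<^sub>R d = 0" by simp
    then show False using H by (metis zero_neq_neg_one)
  qed
  have bd: "b \<noteq> d"
  proof
    assume "b = d"
    then have "0 *\<^sub>R a + 1 *\<^sub>R b + 0 *\<^sub>R c + (-1) *\<^sub>R d = 0" by simp
    then show False using H by (metis zero_neq_neg_one)
  qed
  have cd: "c \<noteq> d"
  proof
    assume "c = d"
    then have "0 *\<^sub>R a + 0 *\<^sub>R b + 1 *\<^sub>R c + (-1) *\<^sub>R d = 0" by simp
    then show False using H by (metis zero_neq_neg_one)
  qed
  have "independent {a, b, c, d}"
  proof
    assume "dependent {a, b, c, d}"
    then obtain u where "\<exists>v\<in>{a,b,c,d}. u v \<noteq> 0" "(\<Sum>v\<in>{a,b,c,d}. u v *\<^sub>R v) = 0"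
      by (auto simp: dependent_finite)
    moreover have "(\<Sum>v\<in>{a,b,c,d}. u v *\<^sub>R v) = u a *\<^sub>R a + u b *\<^sub>R b + u c *\<^sub>R c + u d *\<^sub>R d"
      using ab ac bc ad bd cd by (simp add: add.assoc)
    ultimately show False using H by auto
  qed
  then have "dim {a,b,c,d} = 4" using ab ac bc ad bd cd by (simp add: dim_eq_card_independent)
  then show False using assms by (simp add: proj_coplanar_def)
qed




definition tr :: "(int \<Rightarrow> int \<Rightarrow> 'a) \<Rightarrow> int \<Rightarrow> int \<Rightarrow> 'a" where
  "tr x = (\<lambda>i j. x j i)"

lemma tr_tr[simp]: "tr (tr x) = x" by (simp add: tr_def)
lemma tr_app[simp]: "tr x i j = x j i" by (simp add: tr_def)

lemma col_sym: "proj_collinear a b c = proj_collinear a c b" "proj_collinear a b c = proj_collinear b a c"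
  by (simp_all add: proj_collinear_def insert_commute)

lemma gp_tr: "general_position x \<Longrightarrow> general_position (tr x)"
  unfolding general_position_def
  apply (simp add: Un_commute)
  apply (metis col_sym)
  done

lemma laplace_tr: "laplace2 x i j = laplace1 (tr x) j i"
  by (simp add: laplace1_def laplace2_def)

lemma mq_tr: "multi_Q_net x \<Longrightarrow> multi_Q_net (tr x)"
  unfolding multi_Q_net_def proj_net_def proj_coplanar_def
  by (auto simp: insert_commute)

lemma gp_indep:
  assumes "general_position x"
  shows "\<alpha> *\<^sub>R x i j + \<beta> *\<^sub>R x (i+1) j + \<gamma> *\<^sub>R x (i+1) (j+1) = 0 \<Longrightarrow> \<alpha> = 0 \<and> \<beta> = 0 \<and> \<gamma> = 0"
    and "\<alpha> *\<^sub>R x i j + \<beta> *\<^sub>R x (i+1) j + \<gamma> *\<^sub>R x i (j+1) = 0 \<Longrightarrow> \<alpha> = 0 \<and> \<beta> = 0 \<and> \<gamma> = 0"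
    and "\<alpha> *\<^sub>R x i j + \<beta> *\<^sub>R x (i+1) (j+1) + \<gamma> *\<^sub>R x i (j+1) = 0 \<Longrightarrow> \<alpha> = 0 \<and> \<beta> = 0 \<and> \<gamma> = 0"
    and "\<alpha> *\<^sub>R x (i+1) j + \<beta> *\<^sub>R x (i+1) (j+1) + \<gamma> *\<^sub>R x i (j+1) = 0 \<Longrightarrow> \<alpha> = 0 \<and> \<beta> = 0 \<and> \<gamma> = 0"
  using assms unfolding general_position_def by (metis noncol_indep)+

fun fwd :: "(int \<Rightarrow> 'a \<Rightarrow> bool) \<Rightarrow> (int \<Rightarrow> 'a \<Rightarrow> 'a \<Rightarrow> bool) \<Rightarrow> 'a \<Rightarrow> nat \<Rightarrow> 'a" where
  "fwd V R a 0 = a"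
| "fwd V R a (Suc n) = (SOME w. V (int n + 1) w \<and> R (int n) (fwd V R a n) w)"

fun bwd :: "(int \<Rightarrow> 'a \<Rightarrow> bool) \<Rightarrow> (int \<Rightarrow> 'a \<Rightarrow> 'a \<Rightarrow> bool) \<Rightarrow> 'a \<Rightarrow> nat \<Rightarrow> 'a" where
  "bwd V R a 0 = a"
| "bwd V R a (Suc n) = (SOME u. V (- int n - 1) u \<and> R (- int n - 1) u (bwd V R a n))"

lemma int_seq:
  fixes V :: "int \<Rightarrow> 'a \<Rightarrow> bool" and R :: "int \<Rightarrow> 'a \<Rightarrow> 'a \<Rightarrow> bool"
  assumes V0: "V 0 a"
    and F: "\<And>i u. V i u \<Longrightarrow> \<exists>w. V (i+1) w \<and> R i u w"
    and B: "\<And>i w. V (i+1) w \<Longrightarrow> \<exists>u. V i u \<and> R i u w"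
  shows "\<exists>s. s 0 = a \<and> (\<forall>i. V i (s i) \<and> R i (s i) (s (i+1)))"
proof -
  have f1: "V (int n) (fwd V R a n)" for n
  proof (induction n)
    case 0 then show ?case using V0 by simp
  next
    case (Suc n)
    from F[OF Suc] have "\<exists>w. V (int n + 1) w \<and> R (int n) (fwd V R a n) w" .
    from someI_ex[OF this] show ?case by (simp add: add.commute)
  qed
  have f2: "R (int n) (fwd V R a n) (fwd V R a (Suc n))" for n
    using someI_ex[OF F[OF f1[of n]]] by simp
  have b1: "V (- int n) (bwd V R a n)" for n
  proof (induction n)
    case 0 then show ?case using V0 by simp
  next
    case (Suc n)
    have "V ((- int n - 1) + 1) (bwd V R a n)" using Suc by simp
    from B[OF this] have ex: "\<exists>u. V (- int n - 1) u \<and> R (- int n - 1) u (bwd V R a n)" .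
    have e: "- int (Suc n) = - int n - 1" by simp
    from someI_ex[OF ex] show ?case unfolding bwd.simps e by blast
  qed
  have b2: "R (- int n - 1) (bwd V R a (Suc n)) (bwd V R a n)" for n
  proof -
    have "V ((- int n - 1) + 1) (bwd V R a n)" using b1[of n] by simp
    from someI_ex[OF B[OF this]] show ?thesis by simp
  qed
  define s where "s i = (if i \<ge> 0 then fwd V R a (nat i) else bwd V R a (nat (-i)))" for i
  have "V i (s i) \<and> R i (s i) (s (i+1))" for i
  proof (cases "i \<ge> 0")
    case True
    then have "s i = fwd V R a (nat i)" "s (i+1) = fwd V R a (Suc (nat i))"
      by (simp_all add: s_def nat_add_distrib)
    then show ?thesis using f1[of "nat i"] f2[of "nat i"] True by simp
  next
    case False
    define n where "n = nat (-i-1)"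
    have i: "i = - int n - 1" using False n_def by simp
    have "s i = bwd V R a (Suc n)" using False i by (simp add: s_def nat_add_distrib)
    moreover have "s (i+1) = bwd V R a n"
    proof -
      have "i + 1 = - int n" using i by simp
      then show ?thesis by (cases "n = 0") (auto simp: s_def)
    qed
    moreover have eq: "- int (Suc n) = i" using i by simp
    moreover have "V i (bwd V R a (Suc n))" using b1[of "Suc n"] unfolding eq .
    ultimately show ?thesis using b2[of n] i by simp
  qed
  moreover have "s 0 = a" by (simp add: s_def)
  ultimately show ?thesis by blast
qed

lemma transport:
  fixes a b c :: "'a::real_vector"
  assumes "c = \<kappa> *\<^sub>R a + \<rho> *\<^sub>R b" "\<kappa> \<noteq> 0" "\<rho> \<noteq> 0"
  shows "t \<noteq> 0 \<Longrightarrow> \<exists>t' s. t' \<noteq> 0 \<and> t' *\<^sub>R b - t *\<^sub>R a = s *\<^sub>R c"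
    and "t' \<noteq> 0 \<Longrightarrow> \<exists>t s. t \<noteq> 0 \<and> t' *\<^sub>R b - t *\<^sub>R a = s *\<^sub>R c"
proof -
  assume t: "t \<noteq> 0"
  define s where "s = -t/\<kappa>"
  have "(s*\<rho>) \<noteq> 0 \<and> (s*\<rho>) *\<^sub>R b - t *\<^sub>R a = s *\<^sub>R c"
    using assms t by (simp add: s_def scaleR_right_distrib)
  then show "\<exists>t' s. t' \<noteq> 0 \<and> t' *\<^sub>R b - t *\<^sub>R a = s *\<^sub>R c" by blast
next
  assume t: "t' \<noteq> 0"
  define s where "s = t'/\<rho>"
  have "-(s*\<kappa>) \<noteq> 0 \<and> t' *\<^sub>R b - (-(s*\<kappa>)) *\<^sub>R a = s *\<^sub>R c"
    using assms t by (simp add: s_def scaleR_right_distrib algebra_simps)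
  then show "\<exists>t s. t \<noteq> 0 \<and> t' *\<^sub>R b - t *\<^sub>R a = s *\<^sub>R c" by blast
qed




lemma center:
  fixes x :: "int \<Rightarrow> int \<Rightarrow> real^'m"
  assumes GP: "general_position x" and c0: "c \<noteq> 0"
    and col: "\<forall>j. proj_collinear (x i j) (x (i+1) j) c"
  shows "\<exists>\<kappa> \<rho>. c = \<kappa> *\<^sub>R x i j + \<rho> *\<^sub>R x (i+1) j \<and> \<kappa> \<noteq> 0 \<and> \<rho> \<noteq> 0"
proof -
  have sp: "\<exists>\<kappa> \<rho>. c = \<kappa> *\<^sub>R x i j + \<rho> *\<^sub>R x (i+1) j" for j
  proof -
    obtain \<alpha> \<beta> \<gamma> where nz: "\<alpha> \<noteq> 0 \<or> \<beta> \<noteq> 0 \<or> \<gamma> \<noteq> 0"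
      and eq: "\<alpha> *\<^sub>R x i j + \<beta> *\<^sub>R x (i+1) j + \<gamma> *\<^sub>R c = 0"
      using col_combo[OF spec[OF col, of j]] by blast
    have "\<gamma> \<noteq> 0"
    proof
      assume g: "\<gamma> = 0"
      then have "\<alpha> *\<^sub>R x i j + \<beta> *\<^sub>R x (i+1) j + 0 *\<^sub>R x i (j+1) = 0" using eq by simp
      then have "\<alpha> = 0 \<and> \<beta> = 0" using gp_indep(2)[OF GP] by blast
      then show False using nz g by simp
    qed
    then show ?thesis using solve3[OF _ eq] by blast
  qed
  obtain \<kappa> \<rho> where e: "c = \<kappa> *\<^sub>R x i j + \<rho> *\<^sub>R x (i+1) j" using sp by blast
  obtain \<kappa>' \<rho>' where e': "c = \<kappa>' *\<^sub>R x i (j+1) + \<rho>' *\<^sub>R x (i+1) (j+1)" using sp by blast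
  have k: "\<kappa> \<noteq> 0"
  proof
    assume k0: "\<kappa> = 0"
    then have h: "\<rho> *\<^sub>R x (i+1) j = \<kappa>' *\<^sub>R x i (j+1) + \<rho>' *\<^sub>R x (i+1) (j+1)" using e e' by simp
    have "\<rho> *\<^sub>R x (i+1) j + (-\<rho>') *\<^sub>R x (i+1) (j+1) + (-\<kappa>') *\<^sub>R x i (j+1)
       = \<rho> *\<^sub>R x (i+1) j - (\<kappa>' *\<^sub>R x i (j+1) + \<rho>' *\<^sub>R x (i+1) (j+1))" by (simp add: algebra_simps)
    also have "\<dots> = 0" unfolding h by simp
    finally have "\<rho> *\<^sub>R x (i+1) j + (-\<rho>') *\<^sub>R x (i+1) (j+1) + (-\<kappa>') *\<^sub>R x i (j+1) = 0" .
    then have "\<rho> = 0" using gp_indep(4)[OF GP] by blast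
    then show False using e k0 c0 by simp
  qed
  have r: "\<rho> \<noteq> 0"
  proof
    assume r0: "\<rho> = 0"
    then have h: "\<kappa> *\<^sub>R x i j = \<kappa>' *\<^sub>R x i (j+1) + \<rho>' *\<^sub>R x (i+1) (j+1)" using e e' by simp
    have "\<kappa> *\<^sub>R x i j + (-\<rho>') *\<^sub>R x (i+1) (j+1) + (-\<kappa>') *\<^sub>R x i (j+1)
       = \<kappa> *\<^sub>R x i j - (\<kappa>' *\<^sub>R x i (j+1) + \<rho>' *\<^sub>R x (i+1) (j+1))" by (simp add: algebra_simps)
    also have "\<dots> = 0" unfolding h by simp
    finally have "\<kappa> *\<^sub>R x i j + (-\<rho>') *\<^sub>R x (i+1) (j+1) + (-\<kappa>') *\<^sub>R x i (j+1) = 0" .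
    then have "\<kappa> = 0" using gp_indep(3)[OF GP] by blast
    then show False using e r0 c0 by simp
  qed
  show ?thesis using e k r by blast
qed




lemma quad_fwd:
  fixes P Q P' Q' a b a' b' c d :: "'a::real_vector"
  assumes ind: "\<And>\<alpha> \<beta> \<gamma>. \<alpha> *\<^sub>R P + \<beta> *\<^sub>R Q' + \<gamma> *\<^sub>R P' = 0 \<Longrightarrow> \<alpha> = 0 \<and> \<beta> = 0 \<and> \<gamma> = 0"
    and h1: "a' - a = g *\<^sub>R d" and h2: "b' - b = f *\<^sub>R d" and h3: "b - a = \<sigma> *\<^sub>R c"
    and h4: "a' = t3 *\<^sub>R P'" and h5: "b' = t4 *\<^sub>R Q'"
    and h6: "c = \<kappa> *\<^sub>R P' + \<rho> *\<^sub>R Q'" and h7: "d = \<mu> *\<^sub>R P + \<nu> *\<^sub>R P'" and mu: "\<mu> \<noteq> 0"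
  shows "b' - a' = b - a"
proof -
  have E1: "(b' - a') - (b - a) = (f - g) *\<^sub>R d"
  proof -
    have "(b' - a') - (b - a) = (b' - b) - (a' - a)" by (simp add: algebra_simps)
    also have "\<dots> = f *\<^sub>R d - g *\<^sub>R d" unfolding h1 h2 ..
    also have "\<dots> = (f - g) *\<^sub>R d" by (simp add: algebra_simps)
    finally show ?thesis .
  qed
  have "(f - g) *\<^sub>R d = b' - a' - \<sigma> *\<^sub>R c" using E1 unfolding h3 by simp
  then have E2: "(f - g) *\<^sub>R (\<mu> *\<^sub>R P + \<nu> *\<^sub>R P') = t4 *\<^sub>R Q' - t3 *\<^sub>R P' - \<sigma> *\<^sub>R (\<kappa> *\<^sub>R P' + \<rho> *\<^sub>R Q')"
    unfolding h4 h5 h6 h7 .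
  have "((f - g) * \<mu>) *\<^sub>R P + (\<sigma> * \<rho> - t4) *\<^sub>R Q' + ((f - g) * \<nu> + \<sigma> * \<kappa> + t3) *\<^sub>R P'
     = (f - g) *\<^sub>R (\<mu> *\<^sub>R P + \<nu> *\<^sub>R P') - (t4 *\<^sub>R Q' - t3 *\<^sub>R P' - \<sigma> *\<^sub>R (\<kappa> *\<^sub>R P' + \<rho> *\<^sub>R Q'))"
    by (simp add: algebra_simps)
  then have "((f - g) * \<mu>) *\<^sub>R P + (\<sigma> * \<rho> - t4) *\<^sub>R Q' + ((f - g) * \<nu> + \<sigma> * \<kappa> + t3) *\<^sub>R P' = 0"
    using E2 by (simp only: diff_self)
  then have "(f - g) * \<mu> = 0" using ind by blast
  then have "f = g" using mu by simp
  then show ?thesis using E1 by simp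
qed

lemma quad_bwd:
  fixes P Q P' Q' a b a' b' c d :: "'a::real_vector"
  assumes ind: "\<And>\<alpha> \<beta> \<gamma>. \<alpha> *\<^sub>R P + \<beta> *\<^sub>R Q + \<gamma> *\<^sub>R P' = 0 \<Longrightarrow> \<alpha> = 0 \<and> \<beta> = 0 \<and> \<gamma> = 0"
    and h1: "a' - a = g *\<^sub>R d" and h2: "b' - b = f *\<^sub>R d" and h3: "b' - a' = \<sigma> *\<^sub>R c"
    and h4: "a = t1 *\<^sub>R P" and h5: "b = t2 *\<^sub>R Q"
    and h6: "c = \<kappa> *\<^sub>R P + \<rho> *\<^sub>R Q" and h7: "d = \<mu> *\<^sub>R P + \<nu> *\<^sub>R P'" and nu: "\<nu> \<noteq> 0"
  shows "b - a = b' - a'"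
proof -
  have E1: "(b' - a') - (b - a) = (f - g) *\<^sub>R d"
  proof -
    have "(b' - a') - (b - a) = (b' - b) - (a' - a)" by (simp add: algebra_simps)
    also have "\<dots> = f *\<^sub>R d - g *\<^sub>R d" unfolding h1 h2 ..
    also have "\<dots> = (f - g) *\<^sub>R d" by (simp add: algebra_simps)
    finally show ?thesis .
  qed
  have "(f - g) *\<^sub>R d = \<sigma> *\<^sub>R c - (b - a)" using E1 unfolding h3 by simp
  then have E2: "(f - g) *\<^sub>R (\<mu> *\<^sub>R P + \<nu> *\<^sub>R P') = \<sigma> *\<^sub>R (\<kappa> *\<^sub>R P + \<rho> *\<^sub>R Q) - (t2 *\<^sub>R Q - t1 *\<^sub>R P)"
    unfolding h4 h5 h6 h7 .
  have "((f - g) * \<mu> - \<sigma> * \<kappa> - t1) *\<^sub>R P + (t2 - \<sigma> * \<rho>) *\<^sub>R Q + ((f - g) * \<nu>) *\<^sub>R P'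
     = (f - g) *\<^sub>R (\<mu> *\<^sub>R P + \<nu> *\<^sub>R P') - (\<sigma> *\<^sub>R (\<kappa> *\<^sub>R P + \<rho> *\<^sub>R Q) - (t2 *\<^sub>R Q - t1 *\<^sub>R P))"
    by (simp add: algebra_simps)
  then have "((f - g) * \<mu> - \<sigma> * \<kappa> - t1) *\<^sub>R P + (t2 - \<sigma> * \<rho>) *\<^sub>R Q + ((f - g) * \<nu>) *\<^sub>R P' = 0"
    using E2 by (simp only: diff_self)
  then have "(f - g) * \<nu> = 0" using ind by blast
  then have "f = g" using nu by simp
  then show ?thesis using E1 by simp
qed




lemma persp_to_pq:
  fixes x :: "int \<Rightarrow> int \<Rightarrow> real^'m"
  assumes PN: "proj_net x" and GP: "general_position x"
    and Cc: "\<And>i. c i \<noteq> 0 \<and> (\<forall>j. proj_collinear (x i j) (x (i+1) j) (c i))"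
    and Dd: "\<And>j. d j \<noteq> 0 \<and> (\<forall>i. proj_collinear (x i j) (x i (j+1)) (d j))"
  shows "\<exists>p q. \<forall>i j. proj_eq (x i j) (p i + q j)"
proof -
  have CC: "\<exists>\<kappa> \<rho>. c i = \<kappa> *\<^sub>R x i j + \<rho> *\<^sub>R x (i+1) j \<and> \<kappa> \<noteq> 0 \<and> \<rho> \<noteq> 0" for i j
    using center[OF GP] Cc by blast
  have DD: "\<exists>\<kappa> \<rho>. d j = \<kappa> *\<^sub>R x i j + \<rho> *\<^sub>R x i (j+1) \<and> \<kappa> \<noteq> 0 \<and> \<rho> \<noteq> 0" for i j
  proof -
    have "\<forall>i. proj_collinear (tr x j i) (tr x (j+1) i) (d j)" using Dd by simp
    from center[OF gp_tr[OF GP] _ this, of i] Dd show ?thesis by simp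
  qed
  have "\<exists>A. A 0 = x 0 0 \<and> (\<forall>i. (\<lambda>i u. \<exists>t. t \<noteq> 0 \<and> u = t *\<^sub>R x i 0) i (A i) \<and>
           (\<lambda>i u w. \<exists>s. w - u = s *\<^sub>R c i) i (A i) (A (i+1)))"
  proof (rule int_seq)
    show "\<exists>t. t \<noteq> 0 \<and> x 0 0 = t *\<^sub>R x 0 0" by (rule exI[of _ 1]) simp
  next
    fix i u assume "\<exists>t. t \<noteq> 0 \<and> u = t *\<^sub>R x i 0"
    then obtain t where t: "t \<noteq> 0" "u = t *\<^sub>R x i 0" by blast
    obtain \<kappa> \<rho> where k: "c i = \<kappa> *\<^sub>R x i 0 + \<rho> *\<^sub>R x (i+1) 0" "\<kappa> \<noteq> 0" "\<rho> \<noteq> 0" using CC by blast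
    from transport(1)[OF k t(1)] obtain t' s where "t' \<noteq> 0" "t' *\<^sub>R x (i+1) 0 - t *\<^sub>R x i 0 = s *\<^sub>R c i" by blast
    then show "\<exists>w. (\<exists>t. t \<noteq> 0 \<and> w = t *\<^sub>R x (i + 1) 0) \<and> (\<exists>s. w - u = s *\<^sub>R c i)"
      using t by blast
  next
    fix i w assume "\<exists>t. t \<noteq> 0 \<and> w = t *\<^sub>R x (i+1) 0"
    then obtain t' where t: "t' \<noteq> 0" "w = t' *\<^sub>R x (i+1) 0" by blast
    obtain \<kappa> \<rho> where k: "c i = \<kappa> *\<^sub>R x i 0 + \<rho> *\<^sub>R x (i+1) 0" "\<kappa> \<noteq> 0" "\<rho> \<noteq> 0" using CC by blast
    from transport(2)[OF k t(1)] obtain t s where "t \<noteq> 0" "t' *\<^sub>R x (i+1) 0 - t *\<^sub>R x i 0 = s *\<^sub>R c i" by blast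
    then show "\<exists>u. (\<exists>t. t \<noteq> 0 \<and> u = t *\<^sub>R x i 0) \<and> (\<exists>s. w - u = s *\<^sub>R c i)"
      using t by blast
  qed
  then obtain A where A0: "A 0 = x 0 0" and AV: "\<And>i. \<exists>t. t \<noteq> 0 \<and> A i = t *\<^sub>R x i 0"
    and AR: "\<And>i. \<exists>s. A (i+1) - A i = s *\<^sub>R c i" by blast
  have "\<exists>B. B 0 = A i \<and> (\<forall>j. (\<lambda>j u. \<exists>t. t \<noteq> 0 \<and> u = t *\<^sub>R x i j) j (B j) \<and>
           (\<lambda>j u w. \<exists>s. w - u = s *\<^sub>R d j) j (B j) (B (j+1)))" for i
  proof (rule int_seq)
    show "\<exists>t. t \<noteq> 0 \<and> A i = t *\<^sub>R x i 0" by (rule AV)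
  next
    fix j u assume "\<exists>t. t \<noteq> 0 \<and> u = t *\<^sub>R x i j"
    then obtain t where t: "t \<noteq> 0" "u = t *\<^sub>R x i j" by blast
    obtain \<kappa> \<rho> where k: "d j = \<kappa> *\<^sub>R x i j + \<rho> *\<^sub>R x i (j+1)" "\<kappa> \<noteq> 0" "\<rho> \<noteq> 0" using DD by blast
    from transport(1)[OF k t(1)] obtain t' s where "t' \<noteq> 0" "t' *\<^sub>R x i (j+1) - t *\<^sub>R x i j = s *\<^sub>R d j" by blast
    then show "\<exists>w. (\<exists>t. t \<noteq> 0 \<and> w = t *\<^sub>R x i (j+1)) \<and> (\<exists>s. w - u = s *\<^sub>R d j)"
      using t by blast
  next
    fix j w assume "\<exists>t. t \<noteq> 0 \<and> w = t *\<^sub>R x i (j+1)"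
    then obtain t' where t: "t' \<noteq> 0" "w = t' *\<^sub>R x i (j+1)" by blast
    obtain \<kappa> \<rho> where k: "d j = \<kappa> *\<^sub>R x i j + \<rho> *\<^sub>R x i (j+1)" "\<kappa> \<noteq> 0" "\<rho> \<noteq> 0" using DD by blast
    from transport(2)[OF k t(1)] obtain t s where "t \<noteq> 0" "t' *\<^sub>R x i (j+1) - t *\<^sub>R x i j = s *\<^sub>R d j" by blast
    then show "\<exists>u. (\<exists>t. t \<noteq> 0 \<and> u = t *\<^sub>R x i j) \<and> (\<exists>s. w - u = s *\<^sub>R d j)"
      using t by blast
  qed
  then have "\<forall>i. \<exists>B. B 0 = A i \<and> (\<forall>j. (\<exists>t. t \<noteq> 0 \<and> B j = t *\<^sub>R x i j) \<and>
           (\<exists>s. B (j+1) - B j = s *\<^sub>R d j))" by blast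
  from choice[OF this] obtain X where XX: "\<forall>i. X i 0 = A i \<and> (\<forall>j. (\<exists>t. t \<noteq> 0 \<and> X i j = t *\<^sub>R x i j) \<and>
           (\<exists>s. X i (j+1) - X i j = s *\<^sub>R d j))" by blast
  have X0: "\<And>i. X i 0 = A i" and XV: "\<And>i j. \<exists>t. t \<noteq> 0 \<and> X i j = t *\<^sub>R x i j"
    and XR: "\<And>i j. \<exists>s. X i (j+1) - X i j = s *\<^sub>R d j" using XX by blast+
  have Dconst: "X (i+1) j - X i j = X (i+1) 0 - X i 0" for i j
  proof -
    obtain \<sigma> where sig: "X (i+1) 0 - X i 0 = \<sigma> *\<^sub>R c i" using AR X0 by metis
    show ?thesis
    proof (induction j rule: int_induct[where k=0])
      case base then show ?case by simp
    next
      case (step1 j)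
      obtain g where h1: "X i (j+1) - X i j = g *\<^sub>R d j" using XR by blast
      obtain f where h2: "X (i+1) (j+1) - X (i+1) j = f *\<^sub>R d j" using XR by blast
      have h3: "X (i+1) j - X i j = \<sigma> *\<^sub>R c i" using step1 sig by simp
      obtain t3 where h4: "X i (j+1) = t3 *\<^sub>R x i (j+1)" using XV by blast
      obtain t4 where h5: "X (i+1) (j+1) = t4 *\<^sub>R x (i+1) (j+1)" using XV by blast
      obtain \<kappa> \<rho> where h6: "c i = \<kappa> *\<^sub>R x i (j+1) + \<rho> *\<^sub>R x (i+1) (j+1)" using CC by blast
      obtain \<mu> \<nu> where h7: "d j = \<mu> *\<^sub>R x i j + \<nu> *\<^sub>R x i (j+1)" and mu: "\<mu> \<noteq> 0" using DD by blast
      have "X (i+1) (j+1) - X i (j+1) = X (i+1) j - X i j"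
        by (rule quad_fwd[OF gp_indep(3)[OF GP] h1 h2 h3 h4 h5 h6 h7 mu]) auto
      then show ?case using step1 by simp
    next
      case (step2 j)
      define k where "k = j - 1"
      have j: "j = k + 1" by (simp add: k_def)
      obtain g where h1: "X i (k+1) - X i k = g *\<^sub>R d k" using XR by blast
      obtain f where h2: "X (i+1) (k+1) - X (i+1) k = f *\<^sub>R d k" using XR by blast
      have h3: "X (i+1) (k+1) - X i (k+1) = \<sigma> *\<^sub>R c i" using step2 sig j by simp
      obtain t1 where h4: "X i k = t1 *\<^sub>R x i k" using XV by blast
      obtain t2 where h5: "X (i+1) k = t2 *\<^sub>R x (i+1) k" using XV by blast
      obtain \<kappa> \<rho> where h6: "c i = \<kappa> *\<^sub>R x i k + \<rho> *\<^sub>R x (i+1) k" using CC by blast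
      obtain \<mu> \<nu> where h7: "d k = \<mu> *\<^sub>R x i k + \<nu> *\<^sub>R x i (k+1)" and nu: "\<nu> \<noteq> 0" using DD by blast
      have "X (i+1) k - X i k = X (i+1) (k+1) - X i (k+1)"
        by (rule quad_bwd[OF gp_indep(2)[OF GP] h1 h2 h3 h4 h5 h6 h7 nu]) auto
      then show ?case using step2 unfolding j by simp
    qed
  qed
  have Add: "X i j - X 0 j = X i 0 - X 0 0" for i j
  proof (induction i rule: int_induct[where k=0])
    case base then show ?case by simp
  next
    case (step1 i)
    have "X (i+1) j - X 0 j = (X (i+1) j - X i j) + (X i j - X 0 j)" by simp
    also have "\<dots> = (X (i+1) 0 - X i 0) + (X i 0 - X 0 0)" by (simp only: Dconst[of i j] step1)
    finally show ?case by simp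
  next
    case (step2 i)
    have "X (i-1) j - X 0 j = (X i j - X 0 j) - (X (i-1+1) j - X (i-1) j)" by simp
    also have "\<dots> = (X i 0 - X 0 0) - (X (i-1+1) 0 - X (i-1) 0)" by (simp only: Dconst[of "i-1" j] step2)
    finally show ?case by simp
  qed
  show ?thesis
  proof (intro exI allI)
    fix i j
    have eq: "X i j = X i 0 + (X 0 j - X 0 0)" using Add[of i j] by (simp add: algebra_simps)
    obtain t where t: "t \<noteq> 0" "X i j = t *\<^sub>R x i j" using XV by blast
    have xn: "x i j \<noteq> 0" using PN by (simp add: proj_net_def)
    have "x i j = (1/t) *\<^sub>R X i j" using t by simp
    moreover have "X i j \<noteq> 0" using t xn by simp
    ultimately show "proj_eq (x i j) (X i 0 + (X 0 j - X 0 0))"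
      unfolding proj_eq_def eq[symmetric] using xn t by (intro conjI exI[of _ "1/t"]) auto
  qed
qed




lemma two_span:
  fixes a b u w :: "real^'m"
  assumes "u \<in> span {a, b}" "w \<in> span {a, b}" "u \<noteq> 0" "w \<notin> span {u}"
  shows "span {a, b} \<subseteq> span {u, w}"
proof -
  have "u \<notin> span {}" using assms(3) by simp
  then have iu: "independent {u}" using independent_insertI[OF _ independent_empty] by blast
  have ind: "independent {w, u}" using independent_insertI[OF assms(4) iu] .
  have wu: "w \<noteq> u" using assms(4) span_base by blast
  have "dim (span {a, b}) \<le> card {w, u}"
  proof -
    have "dim {a, b} \<le> card {a, b}" by (intro dim_le_card) (auto intro: span_base)
    also have "\<dots> \<le> 2" by (simp add: card_insert_le_m1)
    also have "\<dots> = card {w, u}" using wu by simp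
    finally show ?thesis by (simp add: dim_span)
  qed
  then have "span {a, b} \<subseteq> span {w, u}"
    using card_ge_dim_independent[of "{w,u}" "span {a,b}"] assms(1,2) ind by blast
  then show ?thesis by (simp add: insert_commute)
qed

lemma span_sub2: "u \<in> S \<Longrightarrow> w \<in> S \<Longrightarrow> subspace S \<Longrightarrow> span {u, w} \<subseteq> S"
  by (intro span_minimal) auto

lemma concur:
  fixes a b :: "int \<Rightarrow> real^'m"
  assumes meetH: "\<And>j k. j \<noteq> k \<Longrightarrow> \<exists>v. v \<noteq> 0 \<and> v \<in> span {a j, b j} \<and> v \<in> span {a k, b k}"
    and cop01: "dim {a 0, b 0, a 1, b 1} \<le> 3"
    and nc: "\<not> proj_collinear (a 0) (b 0) (a 1)"
    and strip: "dim (range a \<union> range b) \<ge> 4"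
  shows "\<exists>c. c \<noteq> 0 \<and> (\<forall>j. c \<in> span {a j, b j})"
proof -
  define L where "L j = span {a j, b j}" for j
  define PP where "PP = span {a 0, b 0, a 1, b 1}"
  have sL: "subspace (L j)" for j by (simp add: L_def)
  have sP: "subspace PP" by (simp add: PP_def)
  have L0: "L 0 \<subseteq> PP" unfolding L_def PP_def by (rule span_mono) auto
  have L1: "L 1 \<subseteq> PP" unfolding L_def PP_def by (rule span_mono) auto
  obtain c where c0: "c \<noteq> 0" and cL0: "c \<in> L 0" and cL1: "c \<in> L 1"
    using meetH[of 0 1] unfolding L_def by auto
  have uniq: "v \<in> span {c}" if "v \<in> L 0" "v \<in> L 1" for v
  proof (rule ccontr)
    assume nv: "v \<notin> span {c}"
    have "L 0 \<subseteq> span {c, v}" using two_span[OF _ _ c0 nv] cL0 that unfolding L_def by blast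
    also have "\<dots> \<subseteq> L 1" using span_sub2[OF cL1 that(2) sL] .
    finally have "{a 0, b 0, a 1} \<subseteq> span {a 1, b 1}"
      unfolding L_def by (auto intro: span_base)
    then have "dim {a 0, b 0, a 1} \<le> card {a 1, b 1}" by (intro dim_le_card) auto
    also have "\<dots> \<le> 2" by (simp add: card_insert_le_m1)
    finally show False using nc by (simp add: proj_collinear_def)
  qed
  have "\<forall>j. c \<in> L j"
  proof (rule ccontr)
    assume "\<not> (\<forall>j. c \<in> L j)"
    then obtain j0 where cj0: "c \<notin> L j0" by blast
    have sub1: "L j \<subseteq> PP" if cj: "c \<notin> L j" for j
    proof -
      have j0': "j \<noteq> 0" "j \<noteq> 1" using cj cL0 cL1 by auto
      obtain u where u: "u \<noteq> 0" "u \<in> L j" "u \<in> L 0" using meetH[of j 0] j0' unfolding L_def by auto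
      obtain w where w: "w \<noteq> 0" "w \<in> L j" "w \<in> L 1" using meetH[of j 1] j0' unfolding L_def by auto
      have nw: "w \<notin> span {u}"
      proof
        assume "w \<in> span {u}"
        then obtain k where k: "w = k *\<^sub>R u" by (auto simp: span_singleton)
        then have "w \<in> L 0" using u(3) sL by (simp add: subspace_scale)
        then have "w \<in> span {c}" using uniq w(3) by blast
        then obtain k' where k': "w = k' *\<^sub>R c" by (auto simp: span_singleton)
        then have "k' \<noteq> 0" using w(1) by auto
        then have "c = (1/k') *\<^sub>R w" using k' by simp
        then have "c \<in> L j" using w(2) sL by (simp add: subspace_scale)
        then show False using cj by blast
      qed
      have "L j \<subseteq> span {u, w}" using two_span[OF _ _ u(1) nw] u(2) w(2) unfolding L_def by blast
      also have "\<dots> \<subseteq> PP" using span_sub2[OF _ _ sP] u(3) w(3) L0 L1 by blast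
      finally show ?thesis .
    qed
    have sub2: "L k \<subseteq> PP" for k
    proof (cases "c \<in> L k")
      case False then show ?thesis using sub1 by blast
    next
      case True
      then have "k \<noteq> j0" using cj0 by auto
      then obtain e where e: "e \<noteq> 0" "e \<in> L k" "e \<in> L j0" using meetH[of k j0] unfolding L_def by auto
      have ne: "e \<notin> span {c}"
      proof
        assume "e \<in> span {c}"
        then obtain t where t: "e = t *\<^sub>R c" by (auto simp: span_singleton)
        then have "t \<noteq> 0" using e(1) by auto
        then have "c = (1/t) *\<^sub>R e" using t by simp
        then have "c \<in> L j0" using e(3) sL by (simp add: subspace_scale)
        then show False using cj0 by blast
      qed
      have "L k \<subseteq> span {c, e}" using two_span[OF _ _ c0 ne] True e(2) unfolding L_def by blast
      also have "\<dots> \<subseteq> PP" using span_sub2[OF _ _ sP] cL0 L0 e(3) sub1[OF cj0] by blast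
      finally show ?thesis .
    qed
    have "range a \<union> range b \<subseteq> PP"
    proof
      fix v assume "v \<in> range a \<union> range b"
      then obtain k where "v = a k \<or> v = b k" by blast
      moreover have "a k \<in> L k" "b k \<in> L k" unfolding L_def by (auto intro: span_base)
      ultimately show "v \<in> PP" using sub2[of k] by blast
    qed
    then have "dim (range a \<union> range b) \<le> dim {a 0, b 0, a 1, b 1}"
      unfolding PP_def by (rule dim_mono)
    then show False using cop01 strip by simp
  qed
  then show ?thesis using c0 unfolding L_def by blast
qed

lemma meet:
  fixes a b c d :: "real^'m"
  assumes "\<alpha> *\<^sub>R a + \<beta> *\<^sub>R b + \<gamma> *\<^sub>R c + \<delta> *\<^sub>R d = 0" "\<alpha> \<noteq> 0 \<or> \<beta> \<noteq> 0 \<or> \<gamma> \<noteq> 0 \<or> \<delta> \<noteq> 0"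
    and i1: "\<And>s t. s *\<^sub>R a + t *\<^sub>R b = 0 \<Longrightarrow> s = 0 \<and> t = 0"
    and i2: "\<And>s t. s *\<^sub>R c + t *\<^sub>R d = 0 \<Longrightarrow> s = 0 \<and> t = 0"
  shows "\<exists>v. v \<noteq> 0 \<and> v \<in> span {a, b} \<and> v \<in> span {c, d}"
proof -
  define v where "v = \<alpha> *\<^sub>R a + \<beta> *\<^sub>R b"
  have v2: "v = (-\<gamma>) *\<^sub>R c + (-\<delta>) *\<^sub>R d"
  proof -
    have "(\<alpha> *\<^sub>R a + \<beta> *\<^sub>R b) + (\<gamma> *\<^sub>R c + \<delta> *\<^sub>R d) = 0" using assms(1) by (simp add: add.assoc)
    then have "\<alpha> *\<^sub>R a + \<beta> *\<^sub>R b = - (\<gamma> *\<^sub>R c + \<delta> *\<^sub>R d)" by (metis add.commute add_eq_0_iff)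
    then show ?thesis by (simp add: v_def)
  qed
  have "v \<noteq> 0"
  proof
    assume "v = 0"
    then have "\<alpha> = 0 \<and> \<beta> = 0" using i1[of \<alpha> \<beta>] v_def by simp
    moreover have "-\<gamma> = 0 \<and> -\<delta> = 0" using i2 v2 \<open>v = 0\<close> by metis
    ultimately show False using assms(2) by simp
  qed
  moreover have "v \<in> span {a, b}" unfolding span2 v_def by blast
  moreover have "v \<in> span {c, d}" unfolding span2 v2 by blast
  ultimately show ?thesis by blast
qed




lemma qnet_tr: "Q_net x \<Longrightarrow> Q_net (tr x)"
  unfolding Q_net_def proj_net_def proj_coplanar_def
  by (auto simp: insert_commute)

lemma pq_scale:
  assumes "\<forall>i j. proj_eq (x i j) (p i + q j)"
  shows "\<exists>\<mu>. (\<forall>i j. \<mu> i j \<noteq> 0) \<and> (\<forall>i j. x i j = \<mu> i j *\<^sub>R (p i + q j)) \<and> (\<forall>i j. p i + q j \<noteq> 0)"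
proof -
  have h: "\<forall>i. \<forall>j. \<exists>k. k \<noteq> 0 \<and> x i j = k *\<^sub>R (p i + q j)" using assms unfolding proj_eq_def by blast
  have "\<forall>i. \<exists>f. \<forall>j. f j \<noteq> 0 \<and> x i j = f j *\<^sub>R (p i + q j)"
  proof
    fix i show "\<exists>f. \<forall>j. f j \<noteq> 0 \<and> x i j = f j *\<^sub>R (p i + q j)" using h by (intro choice) blast
  qed
  from choice[OF this] obtain \<mu> where "\<forall>i j. \<mu> i j \<noteq> 0 \<and> x i j = \<mu> i j *\<^sub>R (p i + q j)" by blast
  moreover have "\<And>i j. p i + q j \<noteq> 0" using assms unfolding proj_eq_def by blast
  ultimately show ?thesis by blast
qed

lemma pq_mq:
  assumes QN: "Q_net x" and PQ: "\<forall>i j. proj_eq (x i j) (p i + q j)"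
  shows "multi_Q_net x"
proof -
  obtain \<mu> where m0': "\<forall>i j. \<mu> i j \<noteq> 0" and mx': "\<forall>i j. x i j = \<mu> i j *\<^sub>R (p i + q j)"
    and y0': "\<forall>i j. p i + q j \<noteq> 0"
    using pq_scale[OF PQ] by blast
  have m0: "\<And>i j. \<mu> i j \<noteq> 0" and mx: "\<And>i j. x i j = \<mu> i j *\<^sub>R (p i + q j)"
    and y0: "\<And>i j. p i + q j \<noteq> 0" using m0' mx' y0' by blast+
  have "proj_coplanar (x i0 j0) (x i0 j1) (x i1 j1) (x i1 j0)" for i0 i1 j0 j1
  proof (rule span_cop)
    have e: "p i1 + q j0 = (1/\<mu> i0 j0) *\<^sub>R x i0 j0 - (1/\<mu> i0 j1) *\<^sub>R x i0 j1 + (1/\<mu> i1 j1) *\<^sub>R x i1 j1"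
      using m0 by (simp add: mx)
    have "x i1 j0 = \<mu> i1 j0 *\<^sub>R ((1/\<mu> i0 j0) *\<^sub>R x i0 j0 - (1/\<mu> i0 j1) *\<^sub>R x i0 j1 + (1/\<mu> i1 j1) *\<^sub>R x i1 j1)"
      by (subst mx) (simp only: e)
    also have "\<dots> \<in> span {x i0 j0, x i0 j1, x i1 j1}"
      by (intro span_scale span_add span_diff span_base) auto
    finally show "x i1 j0 \<in> span {x i0 j0, x i0 j1, x i1 j1}" .
  qed
  then show ?thesis using QN unfolding multi_Q_net_def Q_net_def by blast
qed

lemma pq_persp:
  fixes x :: "int \<Rightarrow> int \<Rightarrow> real^'m"
  assumes PQ: "\<forall>i j. proj_eq (x i j) (p i + q j)"
  shows "in_perspective (x i0) (x i1)"
proof -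
  obtain \<mu> where m0': "\<forall>i j. \<mu> i j \<noteq> 0" and mx': "\<forall>i j. x i j = \<mu> i j *\<^sub>R (p i + q j)"
    and y0': "\<forall>i j. p i + q j \<noteq> 0"
    using pq_scale[OF PQ] by blast
  have m0: "\<And>i j. \<mu> i j \<noteq> 0" and mx: "\<And>i j. x i j = \<mu> i j *\<^sub>R (p i + q j)"
    and y0: "\<And>i j. p i + q j \<noteq> 0" using m0' mx' y0' by blast+
  show ?thesis
  proof (cases "p i0 = p i1")
    case True
    have "x 0 0 \<noteq> 0" using m0 y0 mx by simp
    moreover have "proj_collinear (x i0 k) (x i1 k) (x 0 0)" for k
    proof -
      have "x i1 k = (\<mu> i1 k / \<mu> i0 k) *\<^sub>R x i0 k" using True m0 by (simp add: mx)
      also have "\<dots> \<in> span {x i0 k, x 0 0}" by (intro span_scale span_base) auto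
      finally show ?thesis using span_col col_sym by blast
    qed
    ultimately show ?thesis unfolding in_perspective_def by blast
  next
    case False
    then have "p i0 - p i1 \<noteq> 0" by simp
    moreover have "proj_collinear (x i0 k) (x i1 k) (p i0 - p i1)" for k
    proof (rule span_col)
      have "p i0 - p i1 = (1/\<mu> i0 k) *\<^sub>R x i0 k - (1/\<mu> i1 k) *\<^sub>R x i1 k" using m0 by (simp add: mx)
      also have "\<dots> \<in> span {x i0 k, x i1 k}" by (intro span_scale span_diff span_base) auto
      finally show "p i0 - p i1 \<in> span {x i0 k, x i1 k}" .
    qed
    ultimately show ?thesis unfolding in_perspective_def by blast
  qed
qed

lemma pq_lap:
  fixes x :: "int \<Rightarrow> int \<Rightarrow> real^'m"
  assumes GP: "general_position x" and PQ: "\<forall>i j. proj_eq (x i j) (p i + q j)"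
  shows "laplace1 x i j = span {p (i+1) - p i}"
proof -
  obtain \<mu> where m0': "\<forall>i j. \<mu> i j \<noteq> 0" and mx': "\<forall>i j. x i j = \<mu> i j *\<^sub>R (p i + q j)"
    and y0': "\<forall>i j. p i + q j \<noteq> 0"
    using pq_scale[OF PQ] by blast
  have m0: "\<And>i j. \<mu> i j \<noteq> 0" and mx: "\<And>i j. x i j = \<mu> i j *\<^sub>R (p i + q j)"
    and y0: "\<And>i j. p i + q j \<noteq> 0" using m0' mx' y0' by blast+
  let ?e = "p (i+1) - p i"
  have e1: "?e \<in> span {x i j, x (i+1) j}"
  proof -
    have "?e = (1/\<mu> (i+1) j) *\<^sub>R x (i+1) j - (1/\<mu> i j) *\<^sub>R x i j" using m0 by (simp add: mx)
    also have "\<dots> \<in> span {x i j, x (i+1) j}" by (intro span_scale span_diff span_base) auto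
    finally show ?thesis .
  qed
  have e2: "?e \<in> span {x i (j+1), x (i+1) (j+1)}"
  proof -
    have "?e = (1/\<mu> (i+1) (j+1)) *\<^sub>R x (i+1) (j+1) - (1/\<mu> i (j+1)) *\<^sub>R x i (j+1)" using m0 by (simp add: mx)
    also have "\<dots> \<in> span {x i (j+1), x (i+1) (j+1)}" by (intro span_scale span_diff span_base) auto
    finally show ?thesis .
  qed
  have sup: "span {?e} \<subseteq> laplace1 x i j"
    unfolding laplace1_def using e1 e2 by (intro span_minimal) (auto intro: subspace_inter)
  have sub: "laplace1 x i j \<subseteq> span {?e}"
  proof
    fix v assume "v \<in> laplace1 x i j"
    then obtain s t u w where v1: "v = s *\<^sub>R x i j + t *\<^sub>R x (i+1) j"
      and v2: "v = u *\<^sub>R x i (j+1) + w *\<^sub>R x (i+1) (j+1)"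
      unfolding laplace1_def Int_iff span2 by blast
    define W where "W = w * \<mu> (i+1) (j+1)"
    define c1 where "c1 = s * \<mu> i j + W"
    define c2 where "c2 = t * \<mu> (i+1) j - W"
    define c3 where "c3 = - u * \<mu> i (j+1) - W"
    have "c1 *\<^sub>R (p i + q j) + c2 *\<^sub>R (p (i+1) + q j) + c3 *\<^sub>R (p i + q (j+1))
        = (s *\<^sub>R x i j + t *\<^sub>R x (i+1) j) - (u *\<^sub>R x i (j+1) + w *\<^sub>R x (i+1) (j+1))"
      unfolding c1_def c2_def c3_def W_def mx by (simp add: algebra_simps)
    also have "\<dots> = 0" using v1 v2 by simp
    finally have E: "c1 *\<^sub>R (p i + q j) + c2 *\<^sub>R (p (i+1) + q j) + c3 *\<^sub>R (p i + q (j+1)) = 0" .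
    have "(c1 / \<mu> i j) *\<^sub>R x i j + (c2 / \<mu> (i+1) j) *\<^sub>R x (i+1) j + (c3 / \<mu> i (j+1)) *\<^sub>R x i (j+1)
        = c1 *\<^sub>R (p i + q j) + c2 *\<^sub>R (p (i+1) + q j) + c3 *\<^sub>R (p i + q (j+1))"
      using m0 by (simp add: mx)
    then have "c1 / \<mu> i j = 0 \<and> c2 / \<mu> (i+1) j = 0"
      using E gp_indep(2)[OF GP] by metis
    then have "c1 = 0" "c2 = 0" using m0 by auto
    then have a: "s * \<mu> i j = -W" and b: "t * \<mu> (i+1) j = W" unfolding c1_def c2_def by simp_all
    have "v = (s * \<mu> i j) *\<^sub>R (p i + q j) + (t * \<mu> (i+1) j) *\<^sub>R (p (i+1) + q j)"
      unfolding v1 mx by simp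
    also have "\<dots> = (-W) *\<^sub>R (p i + q j) + W *\<^sub>R (p (i+1) + q j)" by (simp only: a b)
    also have "\<dots> = W *\<^sub>R ?e" by (simp add: algebra_simps)
    finally have "v = W *\<^sub>R ?e" .
    then show "v \<in> span {?e}" by (simp add: span_scale span_base)
  qed
  show ?thesis using sup sub by blast
qed




lemma lap_persp:
  fixes x :: "int \<Rightarrow> int \<Rightarrow> real^'m"
  assumes QN: "Q_net x" and GP: "general_position x"
    and L: "\<forall>j j'. laplace1 x i j = laplace1 x i j'"
  shows "in_perspective (x i) (x (i+1))"
proof -
  have cop: "proj_coplanar (x i 0) (x (i+1) 0) (x (i+1) 1) (x i 1)"
    using QN unfolding Q_net_def by (metis add_0)
  obtain \<alpha> \<beta> \<gamma> \<delta> where nz: "\<alpha> \<noteq> 0 \<or> \<beta> \<noteq> 0 \<or> \<gamma> \<noteq> 0 \<or> \<delta> \<noteq> 0"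
    and eq: "\<alpha> *\<^sub>R x i 0 + \<beta> *\<^sub>R x (i+1) 0 + \<gamma> *\<^sub>R x (i+1) 1 + \<delta> *\<^sub>R x i 1 = 0"
    using cop_combo[OF cop] by blast
  have i1: "s = 0 \<and> t = 0" if "s *\<^sub>R x i 0 + t *\<^sub>R x (i+1) 0 = 0" for s t
    using gp_indep(2)[OF GP, of s i 0 t 0] that by simp
  have i2: "s = 0 \<and> t = 0" if "s *\<^sub>R x (i+1) 1 + t *\<^sub>R x i 1 = 0" for s t
    using gp_indep(4)[OF GP, of 0 i 0 s t] that by simp
  obtain v where v: "v \<noteq> 0" "v \<in> span {x i 0, x (i+1) 0}" "v \<in> span {x (i+1) 1, x i 1}"
    using meet[OF eq nz i1 i2] by blast
  have "v \<in> laplace1 x i 0" using v unfolding laplace1_def by (simp add: insert_commute)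
  then have "v \<in> laplace1 x i j" for j using L by blast
  then have "proj_collinear (x i j) (x (i+1) j) v" for j
    unfolding laplace1_def by (intro span_col) blast
  then show ?thesis using v(1) unfolding in_perspective_def by blast
qed

lemma mq_persp:
  fixes x :: "int \<Rightarrow> int \<Rightarrow> real^'m"
  assumes MQ: "multi_Q_net x" and GP: "general_position x"
  shows "in_perspective (x i) (x (i+1))"
proof -
  have meetH: "\<exists>v. v \<noteq> 0 \<and> v \<in> span {x i j, x (i+1) j} \<and> v \<in> span {x i k, x (i+1) k}" if jk: "j \<noteq> k" for j k
  proof -
    have cop: "proj_coplanar (x i j) (x i k) (x (i+1) k) (x (i+1) j)"
      using MQ jk unfolding multi_Q_net_def by simp
    obtain \<alpha> \<beta> \<gamma> \<delta> where nz: "\<alpha> \<noteq> 0 \<or> \<beta> \<noteq> 0 \<or> \<gamma> \<noteq> 0 \<or> \<delta> \<noteq> 0"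
      and eq: "\<alpha> *\<^sub>R x i j + \<beta> *\<^sub>R x i k + \<gamma> *\<^sub>R x (i+1) k + \<delta> *\<^sub>R x (i+1) j = 0"
      using cop_combo[OF cop] by blast
    have eq': "\<alpha> *\<^sub>R x i j + \<delta> *\<^sub>R x (i+1) j + \<beta> *\<^sub>R x i k + \<gamma> *\<^sub>R x (i+1) k = 0"
      using eq by (simp add: ac_simps)
    have nz': "\<alpha> \<noteq> 0 \<or> \<delta> \<noteq> 0 \<or> \<beta> \<noteq> 0 \<or> \<gamma> \<noteq> 0" using nz by blast
    have i1: "s = 0 \<and> t = 0" if "s *\<^sub>R x i j + t *\<^sub>R x (i+1) j = 0" for s t
      using gp_indep(2)[OF GP, of s i j t 0] that by simp
    have i2: "s = 0 \<and> t = 0" if "s *\<^sub>R x i k + t *\<^sub>R x (i+1) k = 0" for s t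
      using gp_indep(2)[OF GP, of s i k t 0] that by simp
    show ?thesis using meet[OF eq' nz' i1 i2] by blast
  qed
  have cop01: "dim {x i 0, x (i+1) 0, x i 1, x (i+1) 1} \<le> 3"
  proof -
    have "proj_coplanar (x i 0) (x i 1) (x (i+1) 1) (x (i+1) 0)"
      using MQ unfolding multi_Q_net_def by simp
    then show ?thesis unfolding proj_coplanar_def by (simp add: insert_commute)
  qed
  have nc: "\<not> proj_collinear (x i 0) (x (i+1) 0) (x i 1)"
    using GP unfolding general_position_def by (metis add_0)
  have strip: "dim (range (x i) \<union> range (x (i+1))) \<ge> 4"
    using GP unfolding general_position_def by (metis eta_contract_eq)
  obtain c where c: "c \<noteq> 0" "\<forall>j. c \<in> span {x i j, x (i+1) j}"
    using concur[of "x i" "x (i+1)", OF meetH cop01 nc strip] by blast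
  then show ?thesis unfolding in_perspective_def using span_col by blast
qed




theorem theorem2p3:
  fixes x :: "int \<Rightarrow> int \<Rightarrow> real^'m"
  assumes "Q_net x" and "general_position x"
  shows "(multi_Q_net x \<longleftrightarrow>
           ((\<forall>i0 i1. i0 \<noteq> i1 \<longrightarrow> in_perspective (x i0) (x i1)) \<and>
            (\<forall>j0 j1. j0 \<noteq> j1 \<longrightarrow> in_perspective (\<lambda>i. x i j0) (\<lambda>i. x i j1))))
       \<and> (multi_Q_net x \<longleftrightarrow>
           ((\<forall>i. in_perspective (x i) (x (i+1))) \<and>
            (\<forall>j. in_perspective (\<lambda>i. x i j) (\<lambda>i. x i (j+1)))))
       \<and> (multi_Q_net x \<longleftrightarrow>
           (\<exists>p q :: int \<Rightarrow> real^'m. \<forall>i j. proj_eq (x i j) (p i + q j)))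
       \<and> (multi_Q_net x \<longleftrightarrow>
           ((\<forall>i j j'. laplace1 x i j = laplace1 x i j') \<and>
            (\<forall>i i' j. laplace2 x i j = laplace2 x i' j)))"
proof -
  note QN = assms(1) and GP = assms(2)
  have PN: "proj_net x" using QN unfolding Q_net_def by blast
  let ?ii = "(\<forall>i0 i1. i0 \<noteq> i1 \<longrightarrow> in_perspective (x i0) (x i1)) \<and>
            (\<forall>j0 j1. j0 \<noteq> j1 \<longrightarrow> in_perspective (\<lambda>i. x i j0) (\<lambda>i. x i j1))"
  let ?iii = "(\<forall>i. in_perspective (x i) (x (i+1))) \<and>
            (\<forall>j. in_perspective (\<lambda>i. x i j) (\<lambda>i. x i (j+1)))"
  let ?iv = "\<exists>p q :: int \<Rightarrow> real^'m. \<forall>i j. proj_eq (x i j) (p i + q j)"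
  let ?v = "(\<forall>i j j'. laplace1 x i j = laplace1 x i j') \<and>
            (\<forall>i i' j. laplace2 x i j = laplace2 x i' j)"
  have trc: "tr x j = (\<lambda>i. x i j)" for j by (simp add: tr_def)
  have iii_iv: ?iv if H: ?iii
  proof -
    have "\<forall>i. \<exists>c. c \<noteq> 0 \<and> (\<forall>k. proj_collinear (x i k) (x (i+1) k) c)"
      using H unfolding in_perspective_def by blast
    from choice[OF this] obtain c where c: "\<And>i. c i \<noteq> 0 \<and> (\<forall>j. proj_collinear (x i j) (x (i+1) j) (c i))" by blast
    have "\<forall>j. \<exists>d. d \<noteq> 0 \<and> (\<forall>k. proj_collinear (x k j) (x k (j+1)) d)"
      using H unfolding in_perspective_def by blast
    from choice[OF this] obtain d where d: "\<And>j. d j \<noteq> 0 \<and> (\<forall>i. proj_collinear (x i j) (x i (j+1)) (d j))" by blast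
    show ?thesis using persp_to_pq[OF PN GP c d] by blast
  qed
  have iv_i: "multi_Q_net x" if ?iv using that pq_mq[OF QN] by blast
  have i_iii: ?iii if "multi_Q_net x"
  proof
    show "\<forall>i. in_perspective (x i) (x (i+1))" using mq_persp[OF that GP] by blast
    show "\<forall>j. in_perspective (\<lambda>i. x i j) (\<lambda>i. x i (j+1))"
      using mq_persp[OF mq_tr[OF that] gp_tr[OF GP]] unfolding trc by blast
  qed
  have iv_ii: ?ii if H4: ?iv
  proof -
    obtain p q where PQ: "\<forall>i j. proj_eq (x i j) (p i + q j)" using H4 by blast
    have PQ': "\<forall>j i. proj_eq (tr x j i) (q j + p i)" using PQ by (simp add: add.commute)
    show ?thesis using pq_persp[OF PQ] pq_persp[OF PQ'] unfolding trc by blast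
  qed
  have ii_iii: ?iii if ?ii using that by simp
  have iv_v: ?v if H4: ?iv
  proof -
    obtain p q where PQ: "\<forall>i j. proj_eq (x i j) (p i + q j)" using H4 by blast
    have PQ': "\<forall>j i. proj_eq (tr x j i) (q j + p i)" using PQ by (simp add: add.commute)
    have A: "\<And>i j. laplace1 x i j = span {p (i+1) - p i}" using pq_lap[OF GP PQ] .
    have B: "\<And>j i. laplace1 (tr x) j i = span {q (j+1) - q j}" using pq_lap[OF gp_tr[OF GP] PQ'] .
    show ?thesis unfolding laplace_tr A B by blast
  qed
  have v_iii: ?iii if H: ?v
  proof
    show "\<forall>i. in_perspective (x i) (x (i+1))" using lap_persp[OF QN GP] H by blast
    have "\<forall>j i i'. laplace1 (tr x) j i = laplace1 (tr x) j i'" using H unfolding laplace_tr by metis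
    then show "\<forall>j. in_perspective (\<lambda>i. x i j) (\<lambda>i. x i (j+1))"
      using lap_persp[OF qnet_tr[OF QN] gp_tr[OF GP]] unfolding trc by blast
  qed
  have mq_iv: ?iv if "multi_Q_net x" using iii_iv[OF i_iii[OF that]] .
  show ?thesis
  proof (rule conjI[OF iffI conjI[OF iffI conjI[OF iffI iffI]]])
    show ?ii if "multi_Q_net x" using iv_ii[OF mq_iv[OF that]] .
    show "multi_Q_net x" if ?ii using iv_i[OF iii_iv[OF ii_iii[OF that]]] .
    show ?iii if "multi_Q_net x" using i_iii[OF that] .
    show "multi_Q_net x" if ?iii using iv_i[OF iii_iv[OF that]] .
    show ?iv if "multi_Q_net x" using mq_iv[OF that] .
    show "multi_Q_net x" if ?iv using iv_i[OF that] .
    show ?v if "multi_Q_net x" using iv_v[OF mq_iv[OF that]] .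
    show "multi_Q_net x" if ?v using iv_i[OF iii_iv[OF v_iii[OF that]]] .
  qed
qed


end
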